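(* Let $\mathcal{A}\in\hat{\mathcal{T}}_7$ with $c_{15}^7=c_{25}^7=0$. Then $\mathcal{A}$ is isomorphic to a unique algebra structure $\mathcal{A}'\in\hat{\mathcal{T}}_7$ whose structure constants $d_{ij}^k$ satisfy $d_{15}^7=d_{25}^7=0$ and $d_{46}^7=1$.
   Context: Over $\mathbb{C}$, basis $e_1,\dots,e_7$, $e_ie_j=\sum_kc_{ij}^ke_k$. $\hat{\mathcal{T}}_7$ is the family of anticommutative algebra structures with $c_{ij}^k=0$ whenever $k\le\max\{i,j\}$, $e_ie_{i+1}=e_{i+2}$ for $1\le i\le5$, $c_{13}^4=c_{14}^5=c_{15}^6=c_{24}^5=c_{25}^6=c_{14}^6=c_{24}^6=c_{13}^6=0$, $c_{35}^6=1$ and $c_{13}^5c_{46}^7\ne0$, other constants arbitrary subject to anticommutativity. *)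

theory Defs
  imports Complex_Main
begin

text \<open>An algebra structure on the basis e_1..e_7 is given by its structure constants
  c i j k (the coefficient of e_k in e_i e_j), indices in {1..7}; outside this
  range the function is required to vanish so that structures correspond
  one-to-one to such functions.\<close>

type_synonym sconst = "nat \<Rightarrow> nat \<Rightarrow> nat \<Rightarrow> complex"

definition T7hat :: "sconst \<Rightarrow> bool" where
  "T7hat c \<longleftrightarrow>
     (\<forall>i j k. c i j k \<noteq> 0 \<longrightarrow> i \<in> {1..7} \<and> j \<in> {1..7} \<and> k \<in> {1..7}) \<and>
     (\<forall>i j k. c i i k = 0 \<and> c j i k = - c i j k) \<and>
     (\<forall>i j k. k \<le> max i j \<longrightarrow> c i j k = 0) \<and>
     (\<forall>i\<in>{1..5}. \<forall>k. c i (i+1) k = (if k = i + 2 then 1 else 0)) \<and>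
     c 1 3 4 = 0 \<and> c 1 4 5 = 0 \<and> c 1 5 6 = 0 \<and> c 2 4 5 = 0 \<and>
     c 2 5 6 = 0 \<and> c 1 4 6 = 0 \<and> c 2 4 6 = 0 \<and> c 1 3 6 = 0 \<and>
     c 3 5 6 = 1 \<and> c 1 3 5 * c 4 6 7 \<noteq> 0"

text \<open>Isomorphism: an invertible 7x7 matrix P (phi(e_i) = sum_a P a i e'_a)
  with phi(e_i e_j) = phi(e_i) phi(e_j) for all basis vectors.\<close>

definition alg_iso :: "sconst \<Rightarrow> sconst \<Rightarrow> bool" where
  "alg_iso c d \<longleftrightarrow>
     (\<exists>P Q :: nat \<Rightarrow> nat \<Rightarrow> complex.
        (\<forall>i\<in>{1..7}. \<forall>j\<in>{1..7}.
           (\<Sum>k=1..7. P i k * Q k j) = (if i = j then 1 else 0) \<and>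
           (\<Sum>k=1..7. Q i k * P k j) = (if i = j then 1 else 0)) \<and>
        (\<forall>i\<in>{1..7}. \<forall>j\<in>{1..7}. \<forall>a\<in>{1..7}.
           (\<Sum>k=1..7. c i j k * P a k) =
           (\<Sum>b=1..7. \<Sum>e=1..7. P b i * P e j * d b e a)))"

end

theory Submission imports Defs begin
lemma tabT:
  fixes c :: sconst
  assumes T: "T7hat c" and x1: "c 1 5 7 = 0" and x2: "c 2 5 7 = 0"
  shows
    "c 1 1 1 = 0"
    "c 1 1 2 = 0"
    "c 1 1 3 = 0"
    "c 1 1 4 = 0"
    "c 1 1 5 = 0"
    "c 1 1 6 = 0"
    "c 1 1 7 = 0"
    "c 1 2 1 = 0"
    "c 1 2 2 = 0"
    "c 1 2 3 = 1"
    "c 1 2 4 = 0"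
    "c 1 2 5 = 0"
    "c 1 2 6 = 0"
    "c 1 2 7 = 0"
    "c 1 3 1 = 0"
    "c 1 3 2 = 0"
    "c 1 3 3 = 0"
    "c 1 3 4 = 0"
    "c 1 3 6 = 0"
    "c 1 4 1 = 0"
    "c 1 4 2 = 0"
    "c 1 4 3 = 0"
    "c 1 4 4 = 0"
    "c 1 4 5 = 0"
    "c 1 4 6 = 0"
    "c 1 5 1 = 0"
    "c 1 5 2 = 0"
    "c 1 5 3 = 0"
    "c 1 5 4 = 0"
    "c 1 5 5 = 0"
    "c 1 5 6 = 0"
    "c 1 5 7 = 0"
    "c 1 6 1 = 0"
    "c 1 6 2 = 0"
    "c 1 6 3 = 0"
    "c 1 6 4 = 0"
    "c 1 6 5 = 0"
    "c 1 6 6 = 0"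
    "c 1 7 1 = 0"
    "c 1 7 2 = 0"
    "c 1 7 3 = 0"
    "c 1 7 4 = 0"
    "c 1 7 5 = 0"
    "c 1 7 6 = 0"
    "c 1 7 7 = 0"
    "c 2 1 1 = 0"
    "c 2 1 2 = 0"
    "c 2 1 3 = -1"
    "c 2 1 4 = 0"
    "c 2 1 5 = 0"
    "c 2 1 6 = 0"
    "c 2 1 7 = 0"
    "c 2 2 1 = 0"
    "c 2 2 2 = 0"
    "c 2 2 3 = 0"
    "c 2 2 4 = 0"
    "c 2 2 5 = 0"
    "c 2 2 6 = 0"
    "c 2 2 7 = 0"
    "c 2 3 1 = 0"
    "c 2 3 2 = 0"
    "c 2 3 3 = 0"
    "c 2 3 4 = 1"
    "c 2 3 5 = 0"
    "c 2 3 6 = 0"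
    "c 2 3 7 = 0"
    "c 2 4 1 = 0"
    "c 2 4 2 = 0"
    "c 2 4 3 = 0"
    "c 2 4 4 = 0"
    "c 2 4 5 = 0"
    "c 2 4 6 = 0"
    "c 2 5 1 = 0"
    "c 2 5 2 = 0"
    "c 2 5 3 = 0"
    "c 2 5 4 = 0"
    "c 2 5 5 = 0"
    "c 2 5 6 = 0"
    "c 2 5 7 = 0"
    "c 2 6 1 = 0"
    "c 2 6 2 = 0"
    "c 2 6 3 = 0"
    "c 2 6 4 = 0"
    "c 2 6 5 = 0"
    "c 2 6 6 = 0"
    "c 2 7 1 = 0"
    "c 2 7 2 = 0"
    "c 2 7 3 = 0"
    "c 2 7 4 = 0"
    "c 2 7 5 = 0"
    "c 2 7 6 = 0"
    "c 2 7 7 = 0"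
    "c 3 1 1 = 0"
    "c 3 1 2 = 0"
    "c 3 1 3 = 0"
    "c 3 1 4 = 0"
    "c 3 1 5 = - c 1 3 5"
    "c 3 1 6 = 0"
    "c 3 1 7 = - c 1 3 7"
    "c 3 2 1 = 0"
    "c 3 2 2 = 0"
    "c 3 2 3 = 0"
    "c 3 2 4 = -1"
    "c 3 2 5 = 0"
    "c 3 2 6 = 0"
    "c 3 2 7 = 0"
    "c 3 3 1 = 0"
    "c 3 3 2 = 0"
    "c 3 3 3 = 0"
    "c 3 3 4 = 0"
    "c 3 3 5 = 0"
    "c 3 3 6 = 0"
    "c 3 3 7 = 0"
    "c 3 4 1 = 0"
    "c 3 4 2 = 0"
    "c 3 4 3 = 0"
    "c 3 4 4 = 0"
    "c 3 4 5 = 1"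
    "c 3 4 6 = 0"
    "c 3 4 7 = 0"
    "c 3 5 1 = 0"
    "c 3 5 2 = 0"
    "c 3 5 3 = 0"
    "c 3 5 4 = 0"
    "c 3 5 5 = 0"
    "c 3 5 6 = 1"
    "c 3 6 1 = 0"
    "c 3 6 2 = 0"
    "c 3 6 3 = 0"
    "c 3 6 4 = 0"
    "c 3 6 5 = 0"
    "c 3 6 6 = 0"
    "c 3 7 1 = 0"
    "c 3 7 2 = 0"
    "c 3 7 3 = 0"
    "c 3 7 4 = 0"
    "c 3 7 5 = 0"
    "c 3 7 6 = 0"
    "c 3 7 7 = 0"
    "c 4 1 1 = 0"
    "c 4 1 2 = 0"
    "c 4 1 3 = 0"
    "c 4 1 4 = 0"
    "c 4 1 5 = 0"
    "c 4 1 6 = 0"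
    "c 4 1 7 = - c 1 4 7"
    "c 4 2 1 = 0"
    "c 4 2 2 = 0"
    "c 4 2 3 = 0"
    "c 4 2 4 = 0"
    "c 4 2 5 = 0"
    "c 4 2 6 = 0"
    "c 4 2 7 = - c 2 4 7"
    "c 4 3 1 = 0"
    "c 4 3 2 = 0"
    "c 4 3 3 = 0"
    "c 4 3 4 = 0"
    "c 4 3 5 = -1"
    "c 4 3 6 = 0"
    "c 4 3 7 = 0"
    "c 4 4 1 = 0"
    "c 4 4 2 = 0"
    "c 4 4 3 = 0"
    "c 4 4 4 = 0"
    "c 4 4 5 = 0"
    "c 4 4 6 = 0"
    "c 4 4 7 = 0"
    "c 4 5 1 = 0"
    "c 4 5 2 = 0"
    "c 4 5 3 = 0"
    "c 4 5 4 = 0"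
    "c 4 5 5 = 0"
    "c 4 5 6 = 1"
    "c 4 5 7 = 0"
    "c 4 6 1 = 0"
    "c 4 6 2 = 0"
    "c 4 6 3 = 0"
    "c 4 6 4 = 0"
    "c 4 6 5 = 0"
    "c 4 6 6 = 0"
    "c 4 7 1 = 0"
    "c 4 7 2 = 0"
    "c 4 7 3 = 0"
    "c 4 7 4 = 0"
    "c 4 7 5 = 0"
    "c 4 7 6 = 0"
    "c 4 7 7 = 0"
    "c 5 1 1 = 0"
    "c 5 1 2 = 0"
    "c 5 1 3 = 0"
    "c 5 1 4 = 0"
    "c 5 1 5 = 0"
    "c 5 1 6 = 0"
    "c 5 1 7 = 0"
    "c 5 2 1 = 0"
    "c 5 2 2 = 0"
    "c 5 2 3 = 0"
    "c 5 2 4 = 0"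
    "c 5 2 5 = 0"
    "c 5 2 6 = 0"
    "c 5 2 7 = 0"
    "c 5 3 1 = 0"
    "c 5 3 2 = 0"
    "c 5 3 3 = 0"
    "c 5 3 4 = 0"
    "c 5 3 5 = 0"
    "c 5 3 6 = -1"
    "c 5 3 7 = - c 3 5 7"
    "c 5 4 1 = 0"
    "c 5 4 2 = 0"
    "c 5 4 3 = 0"
    "c 5 4 4 = 0"
    "c 5 4 5 = 0"
    "c 5 4 6 = -1"
    "c 5 4 7 = 0"
    "c 5 5 1 = 0"
    "c 5 5 2 = 0"
    "c 5 5 3 = 0"
    "c 5 5 4 = 0"
    "c 5 5 5 = 0"
    "c 5 5 6 = 0"
    "c 5 5 7 = 0"
    "c 5 6 1 = 0"
    "c 5 6 2 = 0"
    "c 5 6 3 = 0"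
    "c 5 6 4 = 0"
    "c 5 6 5 = 0"
    "c 5 6 6 = 0"
    "c 5 6 7 = 1"
    "c 5 7 1 = 0"
    "c 5 7 2 = 0"
    "c 5 7 3 = 0"
    "c 5 7 4 = 0"
    "c 5 7 5 = 0"
    "c 5 7 6 = 0"
    "c 5 7 7 = 0"
    "c 6 1 1 = 0"
    "c 6 1 2 = 0"
    "c 6 1 3 = 0"
    "c 6 1 4 = 0"
    "c 6 1 5 = 0"
    "c 6 1 6 = 0"
    "c 6 1 7 = - c 1 6 7"
    "c 6 2 1 = 0"
    "c 6 2 2 = 0"
    "c 6 2 3 = 0"
    "c 6 2 4 = 0"
    "c 6 2 5 = 0"
    "c 6 2 6 = 0"
    "c 6 2 7 = - c 2 6 7"
    "c 6 3 1 = 0"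
    "c 6 3 2 = 0"
    "c 6 3 3 = 0"
    "c 6 3 4 = 0"
    "c 6 3 5 = 0"
    "c 6 3 6 = 0"
    "c 6 3 7 = - c 3 6 7"
    "c 6 4 1 = 0"
    "c 6 4 2 = 0"
    "c 6 4 3 = 0"
    "c 6 4 4 = 0"
    "c 6 4 5 = 0"
    "c 6 4 6 = 0"
    "c 6 4 7 = - c 4 6 7"
    "c 6 5 1 = 0"
    "c 6 5 2 = 0"
    "c 6 5 3 = 0"
    "c 6 5 4 = 0"
    "c 6 5 5 = 0"
    "c 6 5 6 = 0"
    "c 6 5 7 = -1"
    "c 6 6 1 = 0"
    "c 6 6 2 = 0"
    "c 6 6 3 = 0"
    "c 6 6 4 = 0"
    "c 6 6 5 = 0"
    "c 6 6 6 = 0"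
    "c 6 6 7 = 0"
    "c 6 7 1 = 0"
    "c 6 7 2 = 0"
    "c 6 7 3 = 0"
    "c 6 7 4 = 0"
    "c 6 7 5 = 0"
    "c 6 7 6 = 0"
    "c 6 7 7 = 0"
    "c 7 1 1 = 0"
    "c 7 1 2 = 0"
    "c 7 1 3 = 0"
    "c 7 1 4 = 0"
    "c 7 1 5 = 0"
    "c 7 1 6 = 0"
    "c 7 1 7 = 0"
    "c 7 2 1 = 0"
    "c 7 2 2 = 0"
    "c 7 2 3 = 0"
    "c 7 2 4 = 0"
    "c 7 2 5 = 0"
    "c 7 2 6 = 0"
    "c 7 2 7 = 0"
    "c 7 3 1 = 0"
    "c 7 3 2 = 0"
    "c 7 3 3 = 0"
    "c 7 3 4 = 0"
    "c 7 3 5 = 0"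
    "c 7 3 6 = 0"
    "c 7 3 7 = 0"
    "c 7 4 1 = 0"
    "c 7 4 2 = 0"
    "c 7 4 3 = 0"
    "c 7 4 4 = 0"
    "c 7 4 5 = 0"
    "c 7 4 6 = 0"
    "c 7 4 7 = 0"
    "c 7 5 1 = 0"
    "c 7 5 2 = 0"
    "c 7 5 3 = 0"
    "c 7 5 4 = 0"
    "c 7 5 5 = 0"
    "c 7 5 6 = 0"
    "c 7 5 7 = 0"
    "c 7 6 1 = 0"
    "c 7 6 2 = 0"
    "c 7 6 3 = 0"
    "c 7 6 4 = 0"
    "c 7 6 5 = 0"
    "c 7 6 6 = 0"
    "c 7 6 7 = 0"
    "c 7 7 1 = 0"
    "c 7 7 2 = 0"
    "c 7 7 3 = 0"
    "c 7 7 4 = 0"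
    "c 7 7 5 = 0"
    "c 7 7 6 = 0"
    "c 7 7 7 = 0"
proof -
  have A: "\<And>i j k. k \<le> max i j \<Longrightarrow> c i j k = 0" using T unfolding T7hat_def by blast
  have B: "\<And>i j k. c j i k = - c i j k" using T unfolding T7hat_def by blast
  have I: "\<And>i k. c i i k = 0" using T unfolding T7hat_def by blast
  have C: "\<And>i k. i \<in> {1..5} \<Longrightarrow> c i (i+1) k = (if k = i + 2 then 1 else 0)" using T unfolding T7hat_def by blast
  have F: "c 1 3 4 = 0" "c 1 4 5 = 0" "c 1 5 6 = 0" "c 2 4 5 = 0" "c 2 5 6 = 0" "c 1 4 6 = 0" "c 2 4 6 = 0" "c 1 3 6 = 0" "c 3 5 6 = 1"
    using T unfolding T7hat_def by blast+
  show "c 1 1 1 = 0" by (rule I)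
  show "c 1 1 2 = 0" by (rule I)
  show "c 1 1 3 = 0" by (rule I)
  show "c 1 1 4 = 0" by (rule I)
  show "c 1 1 5 = 0" by (rule I)
  show "c 1 1 6 = 0" by (rule I)
  show "c 1 1 7 = 0" by (rule I)
  show "c 1 2 1 = 0" by (rule A) simp
  show "c 1 2 2 = 0" by (rule A) simp
  show "c 1 2 3 = 1" using C[of 1 3, unfolded one_add_one] by simp
  show "c 1 2 4 = 0" using C[of 1 4, unfolded one_add_one] by simp
  show "c 1 2 5 = 0" using C[of 1 5, unfolded one_add_one] by simp
  show "c 1 2 6 = 0" using C[of 1 6, unfolded one_add_one] by simp
  show "c 1 2 7 = 0" using C[of 1 7, unfolded one_add_one] by simp
  show "c 1 3 1 = 0" by (rule A) simp
  show "c 1 3 2 = 0" by (rule A) simp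
  show "c 1 3 3 = 0" by (rule A) simp
  show "c 1 3 4 = 0" using F x1 x2 by simp
  show "c 1 3 6 = 0" using F x1 x2 by simp
  show "c 1 4 1 = 0" by (rule A) simp
  show "c 1 4 2 = 0" by (rule A) simp
  show "c 1 4 3 = 0" by (rule A) simp
  show "c 1 4 4 = 0" by (rule A) simp
  show "c 1 4 5 = 0" using F x1 x2 by simp
  show "c 1 4 6 = 0" using F x1 x2 by simp
  show "c 1 5 1 = 0" by (rule A) simp
  show "c 1 5 2 = 0" by (rule A) simp
  show "c 1 5 3 = 0" by (rule A) simp
  show "c 1 5 4 = 0" by (rule A) simp
  show "c 1 5 5 = 0" by (rule A) simp
  show "c 1 5 6 = 0" using F x1 x2 by simp
  show "c 1 5 7 = 0" using F x1 x2 by simp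
  show "c 1 6 1 = 0" by (rule A) simp
  show "c 1 6 2 = 0" by (rule A) simp
  show "c 1 6 3 = 0" by (rule A) simp
  show "c 1 6 4 = 0" by (rule A) simp
  show "c 1 6 5 = 0" by (rule A) simp
  show "c 1 6 6 = 0" by (rule A) simp
  show "c 1 7 1 = 0" by (rule A) simp
  show "c 1 7 2 = 0" by (rule A) simp
  show "c 1 7 3 = 0" by (rule A) simp
  show "c 1 7 4 = 0" by (rule A) simp
  show "c 1 7 5 = 0" by (rule A) simp
  show "c 1 7 6 = 0" by (rule A) simp
  show "c 1 7 7 = 0" by (rule A) simp
  show "c 2 1 1 = 0" by (rule A) simp
  show "c 2 1 2 = 0" by (rule A) simp
  have h: "c 1 2 3 = 1" using C[of 1 3, unfolded one_add_one] by simp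
  show "c 2 1 3 = -1" using B[of 2 1 3] h by simp
  have h: "c 1 2 4 = 0" using C[of 1 4, unfolded one_add_one] by simp
  show "c 2 1 4 = 0" using B[of 2 1 4] h by simp
  have h: "c 1 2 5 = 0" using C[of 1 5, unfolded one_add_one] by simp
  show "c 2 1 5 = 0" using B[of 2 1 5] h by simp
  have h: "c 1 2 6 = 0" using C[of 1 6, unfolded one_add_one] by simp
  show "c 2 1 6 = 0" using B[of 2 1 6] h by simp
  have h: "c 1 2 7 = 0" using C[of 1 7, unfolded one_add_one] by simp
  show "c 2 1 7 = 0" using B[of 2 1 7] h by simp
  show "c 2 2 1 = 0" by (rule I)
  show "c 2 2 2 = 0" by (rule I)
  show "c 2 2 3 = 0" by (rule I)
  show "c 2 2 4 = 0" by (rule I)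
  show "c 2 2 5 = 0" by (rule I)
  show "c 2 2 6 = 0" by (rule I)
  show "c 2 2 7 = 0" by (rule I)
  show "c 2 3 1 = 0" by (rule A) simp
  show "c 2 3 2 = 0" by (rule A) simp
  show "c 2 3 3 = 0" by (rule A) simp
  show "c 2 3 4 = 1" using C[of 2 4, unfolded one_add_one] by simp
  show "c 2 3 5 = 0" using C[of 2 5, unfolded one_add_one] by simp
  show "c 2 3 6 = 0" using C[of 2 6, unfolded one_add_one] by simp
  show "c 2 3 7 = 0" using C[of 2 7, unfolded one_add_one] by simp
  show "c 2 4 1 = 0" by (rule A) simp
  show "c 2 4 2 = 0" by (rule A) simp
  show "c 2 4 3 = 0" by (rule A) simp
  show "c 2 4 4 = 0" by (rule A) simp
  show "c 2 4 5 = 0" using F x1 x2 by simp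
  show "c 2 4 6 = 0" using F x1 x2 by simp
  show "c 2 5 1 = 0" by (rule A) simp
  show "c 2 5 2 = 0" by (rule A) simp
  show "c 2 5 3 = 0" by (rule A) simp
  show "c 2 5 4 = 0" by (rule A) simp
  show "c 2 5 5 = 0" by (rule A) simp
  show "c 2 5 6 = 0" using F x1 x2 by simp
  show "c 2 5 7 = 0" using F x1 x2 by simp
  show "c 2 6 1 = 0" by (rule A) simp
  show "c 2 6 2 = 0" by (rule A) simp
  show "c 2 6 3 = 0" by (rule A) simp
  show "c 2 6 4 = 0" by (rule A) simp
  show "c 2 6 5 = 0" by (rule A) simp
  show "c 2 6 6 = 0" by (rule A) simp
  show "c 2 7 1 = 0" by (rule A) simp
  show "c 2 7 2 = 0" by (rule A) simp
  show "c 2 7 3 = 0" by (rule A) simp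
  show "c 2 7 4 = 0" by (rule A) simp
  show "c 2 7 5 = 0" by (rule A) simp
  show "c 2 7 6 = 0" by (rule A) simp
  show "c 2 7 7 = 0" by (rule A) simp
  show "c 3 1 1 = 0" by (rule A) simp
  show "c 3 1 2 = 0" by (rule A) simp
  show "c 3 1 3 = 0" by (rule A) simp
  have h: "c 1 3 4 = 0" using F x1 x2 by simp
  show "c 3 1 4 = 0" using B[of 3 1 4] h by simp
  show "c 3 1 5 = - c 1 3 5" by (rule B)
  have h: "c 1 3 6 = 0" using F x1 x2 by simp
  show "c 3 1 6 = 0" using B[of 3 1 6] h by simp
  show "c 3 1 7 = - c 1 3 7" by (rule B)
  show "c 3 2 1 = 0" by (rule A) simp
  show "c 3 2 2 = 0" by (rule A) simp
  show "c 3 2 3 = 0" by (rule A) simp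
  have h: "c 2 3 4 = 1" using C[of 2 4, unfolded one_add_one] by simp
  show "c 3 2 4 = -1" using B[of 3 2 4] h by simp
  have h: "c 2 3 5 = 0" using C[of 2 5, unfolded one_add_one] by simp
  show "c 3 2 5 = 0" using B[of 3 2 5] h by simp
  have h: "c 2 3 6 = 0" using C[of 2 6, unfolded one_add_one] by simp
  show "c 3 2 6 = 0" using B[of 3 2 6] h by simp
  have h: "c 2 3 7 = 0" using C[of 2 7, unfolded one_add_one] by simp
  show "c 3 2 7 = 0" using B[of 3 2 7] h by simp
  show "c 3 3 1 = 0" by (rule I)
  show "c 3 3 2 = 0" by (rule I)
  show "c 3 3 3 = 0" by (rule I)
  show "c 3 3 4 = 0" by (rule I)
  show "c 3 3 5 = 0" by (rule I)
  show "c 3 3 6 = 0" by (rule I)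
  show "c 3 3 7 = 0" by (rule I)
  show "c 3 4 1 = 0" by (rule A) simp
  show "c 3 4 2 = 0" by (rule A) simp
  show "c 3 4 3 = 0" by (rule A) simp
  show "c 3 4 4 = 0" by (rule A) simp
  show "c 3 4 5 = 1" using C[of 3 5, unfolded one_add_one] by simp
  show "c 3 4 6 = 0" using C[of 3 6, unfolded one_add_one] by simp
  show "c 3 4 7 = 0" using C[of 3 7, unfolded one_add_one] by simp
  show "c 3 5 1 = 0" by (rule A) simp
  show "c 3 5 2 = 0" by (rule A) simp
  show "c 3 5 3 = 0" by (rule A) simp
  show "c 3 5 4 = 0" by (rule A) simp
  show "c 3 5 5 = 0" by (rule A) simp
  show "c 3 5 6 = 1" using F x1 x2 by simp
  show "c 3 6 1 = 0" by (rule A) simp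
  show "c 3 6 2 = 0" by (rule A) simp
  show "c 3 6 3 = 0" by (rule A) simp
  show "c 3 6 4 = 0" by (rule A) simp
  show "c 3 6 5 = 0" by (rule A) simp
  show "c 3 6 6 = 0" by (rule A) simp
  show "c 3 7 1 = 0" by (rule A) simp
  show "c 3 7 2 = 0" by (rule A) simp
  show "c 3 7 3 = 0" by (rule A) simp
  show "c 3 7 4 = 0" by (rule A) simp
  show "c 3 7 5 = 0" by (rule A) simp
  show "c 3 7 6 = 0" by (rule A) simp
  show "c 3 7 7 = 0" by (rule A) simp
  show "c 4 1 1 = 0" by (rule A) simp
  show "c 4 1 2 = 0" by (rule A) simp
  show "c 4 1 3 = 0" by (rule A) simp
  show "c 4 1 4 = 0" by (rule A) simp
  have h: "c 1 4 5 = 0" using F x1 x2 by simp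
  show "c 4 1 5 = 0" using B[of 4 1 5] h by simp
  have h: "c 1 4 6 = 0" using F x1 x2 by simp
  show "c 4 1 6 = 0" using B[of 4 1 6] h by simp
  show "c 4 1 7 = - c 1 4 7" by (rule B)
  show "c 4 2 1 = 0" by (rule A) simp
  show "c 4 2 2 = 0" by (rule A) simp
  show "c 4 2 3 = 0" by (rule A) simp
  show "c 4 2 4 = 0" by (rule A) simp
  have h: "c 2 4 5 = 0" using F x1 x2 by simp
  show "c 4 2 5 = 0" using B[of 4 2 5] h by simp
  have h: "c 2 4 6 = 0" using F x1 x2 by simp
  show "c 4 2 6 = 0" using B[of 4 2 6] h by simp
  show "c 4 2 7 = - c 2 4 7" by (rule B)
  show "c 4 3 1 = 0" by (rule A) simp
  show "c 4 3 2 = 0" by (rule A) simp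
  show "c 4 3 3 = 0" by (rule A) simp
  show "c 4 3 4 = 0" by (rule A) simp
  have h: "c 3 4 5 = 1" using C[of 3 5, unfolded one_add_one] by simp
  show "c 4 3 5 = -1" using B[of 4 3 5] h by simp
  have h: "c 3 4 6 = 0" using C[of 3 6, unfolded one_add_one] by simp
  show "c 4 3 6 = 0" using B[of 4 3 6] h by simp
  have h: "c 3 4 7 = 0" using C[of 3 7, unfolded one_add_one] by simp
  show "c 4 3 7 = 0" using B[of 4 3 7] h by simp
  show "c 4 4 1 = 0" by (rule I)
  show "c 4 4 2 = 0" by (rule I)
  show "c 4 4 3 = 0" by (rule I)
  show "c 4 4 4 = 0" by (rule I)
  show "c 4 4 5 = 0" by (rule I)
  show "c 4 4 6 = 0" by (rule I)
  show "c 4 4 7 = 0" by (rule I)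
  show "c 4 5 1 = 0" by (rule A) simp
  show "c 4 5 2 = 0" by (rule A) simp
  show "c 4 5 3 = 0" by (rule A) simp
  show "c 4 5 4 = 0" by (rule A) simp
  show "c 4 5 5 = 0" by (rule A) simp
  show "c 4 5 6 = 1" using C[of 4 6, unfolded one_add_one] by simp
  show "c 4 5 7 = 0" using C[of 4 7, unfolded one_add_one] by simp
  show "c 4 6 1 = 0" by (rule A) simp
  show "c 4 6 2 = 0" by (rule A) simp
  show "c 4 6 3 = 0" by (rule A) simp
  show "c 4 6 4 = 0" by (rule A) simp
  show "c 4 6 5 = 0" by (rule A) simp
  show "c 4 6 6 = 0" by (rule A) simp
  show "c 4 7 1 = 0" by (rule A) simp
  show "c 4 7 2 = 0" by (rule A) simp
  show "c 4 7 3 = 0" by (rule A) simp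
  show "c 4 7 4 = 0" by (rule A) simp
  show "c 4 7 5 = 0" by (rule A) simp
  show "c 4 7 6 = 0" by (rule A) simp
  show "c 4 7 7 = 0" by (rule A) simp
  show "c 5 1 1 = 0" by (rule A) simp
  show "c 5 1 2 = 0" by (rule A) simp
  show "c 5 1 3 = 0" by (rule A) simp
  show "c 5 1 4 = 0" by (rule A) simp
  show "c 5 1 5 = 0" by (rule A) simp
  have h: "c 1 5 6 = 0" using F x1 x2 by simp
  show "c 5 1 6 = 0" using B[of 5 1 6] h by simp
  have h: "c 1 5 7 = 0" using F x1 x2 by simp
  show "c 5 1 7 = 0" using B[of 5 1 7] h by simp
  show "c 5 2 1 = 0" by (rule A) simp
  show "c 5 2 2 = 0" by (rule A) simp
  show "c 5 2 3 = 0" by (rule A) simp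
  show "c 5 2 4 = 0" by (rule A) simp
  show "c 5 2 5 = 0" by (rule A) simp
  have h: "c 2 5 6 = 0" using F x1 x2 by simp
  show "c 5 2 6 = 0" using B[of 5 2 6] h by simp
  have h: "c 2 5 7 = 0" using F x1 x2 by simp
  show "c 5 2 7 = 0" using B[of 5 2 7] h by simp
  show "c 5 3 1 = 0" by (rule A) simp
  show "c 5 3 2 = 0" by (rule A) simp
  show "c 5 3 3 = 0" by (rule A) simp
  show "c 5 3 4 = 0" by (rule A) simp
  show "c 5 3 5 = 0" by (rule A) simp
  have h: "c 3 5 6 = 1" using F x1 x2 by simp
  show "c 5 3 6 = -1" using B[of 5 3 6] h by simp
  show "c 5 3 7 = - c 3 5 7" by (rule B)
  show "c 5 4 1 = 0" by (rule A) simp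
  show "c 5 4 2 = 0" by (rule A) simp
  show "c 5 4 3 = 0" by (rule A) simp
  show "c 5 4 4 = 0" by (rule A) simp
  show "c 5 4 5 = 0" by (rule A) simp
  have h: "c 4 5 6 = 1" using C[of 4 6, unfolded one_add_one] by simp
  show "c 5 4 6 = -1" using B[of 5 4 6] h by simp
  have h: "c 4 5 7 = 0" using C[of 4 7, unfolded one_add_one] by simp
  show "c 5 4 7 = 0" using B[of 5 4 7] h by simp
  show "c 5 5 1 = 0" by (rule I)
  show "c 5 5 2 = 0" by (rule I)
  show "c 5 5 3 = 0" by (rule I)
  show "c 5 5 4 = 0" by (rule I)
  show "c 5 5 5 = 0" by (rule I)
  show "c 5 5 6 = 0" by (rule I)
  show "c 5 5 7 = 0" by (rule I)
  show "c 5 6 1 = 0" by (rule A) simp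
  show "c 5 6 2 = 0" by (rule A) simp
  show "c 5 6 3 = 0" by (rule A) simp
  show "c 5 6 4 = 0" by (rule A) simp
  show "c 5 6 5 = 0" by (rule A) simp
  show "c 5 6 6 = 0" by (rule A) simp
  show "c 5 6 7 = 1" using C[of 5 7, unfolded one_add_one] by simp
  show "c 5 7 1 = 0" by (rule A) simp
  show "c 5 7 2 = 0" by (rule A) simp
  show "c 5 7 3 = 0" by (rule A) simp
  show "c 5 7 4 = 0" by (rule A) simp
  show "c 5 7 5 = 0" by (rule A) simp
  show "c 5 7 6 = 0" by (rule A) simp
  show "c 5 7 7 = 0" by (rule A) simp
  show "c 6 1 1 = 0" by (rule A) simp
  show "c 6 1 2 = 0" by (rule A) simp
  show "c 6 1 3 = 0" by (rule A) simp
  show "c 6 1 4 = 0" by (rule A) simp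
  show "c 6 1 5 = 0" by (rule A) simp
  show "c 6 1 6 = 0" by (rule A) simp
  show "c 6 1 7 = - c 1 6 7" by (rule B)
  show "c 6 2 1 = 0" by (rule A) simp
  show "c 6 2 2 = 0" by (rule A) simp
  show "c 6 2 3 = 0" by (rule A) simp
  show "c 6 2 4 = 0" by (rule A) simp
  show "c 6 2 5 = 0" by (rule A) simp
  show "c 6 2 6 = 0" by (rule A) simp
  show "c 6 2 7 = - c 2 6 7" by (rule B)
  show "c 6 3 1 = 0" by (rule A) simp
  show "c 6 3 2 = 0" by (rule A) simp
  show "c 6 3 3 = 0" by (rule A) simp
  show "c 6 3 4 = 0" by (rule A) simp
  show "c 6 3 5 = 0" by (rule A) simp
  show "c 6 3 6 = 0" by (rule A) simp
  show "c 6 3 7 = - c 3 6 7" by (rule B)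
  show "c 6 4 1 = 0" by (rule A) simp
  show "c 6 4 2 = 0" by (rule A) simp
  show "c 6 4 3 = 0" by (rule A) simp
  show "c 6 4 4 = 0" by (rule A) simp
  show "c 6 4 5 = 0" by (rule A) simp
  show "c 6 4 6 = 0" by (rule A) simp
  show "c 6 4 7 = - c 4 6 7" by (rule B)
  show "c 6 5 1 = 0" by (rule A) simp
  show "c 6 5 2 = 0" by (rule A) simp
  show "c 6 5 3 = 0" by (rule A) simp
  show "c 6 5 4 = 0" by (rule A) simp
  show "c 6 5 5 = 0" by (rule A) simp
  show "c 6 5 6 = 0" by (rule A) simp
  have h: "c 5 6 7 = 1" using C[of 5 7, unfolded one_add_one] by simp
  show "c 6 5 7 = -1" using B[of 6 5 7] h by simp
  show "c 6 6 1 = 0" by (rule I)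
  show "c 6 6 2 = 0" by (rule I)
  show "c 6 6 3 = 0" by (rule I)
  show "c 6 6 4 = 0" by (rule I)
  show "c 6 6 5 = 0" by (rule I)
  show "c 6 6 6 = 0" by (rule I)
  show "c 6 6 7 = 0" by (rule I)
  show "c 6 7 1 = 0" by (rule A) simp
  show "c 6 7 2 = 0" by (rule A) simp
  show "c 6 7 3 = 0" by (rule A) simp
  show "c 6 7 4 = 0" by (rule A) simp
  show "c 6 7 5 = 0" by (rule A) simp
  show "c 6 7 6 = 0" by (rule A) simp
  show "c 6 7 7 = 0" by (rule A) simp
  show "c 7 1 1 = 0" by (rule A) simp
  show "c 7 1 2 = 0" by (rule A) simp
  show "c 7 1 3 = 0" by (rule A) simp
  show "c 7 1 4 = 0" by (rule A) simp
  show "c 7 1 5 = 0" by (rule A) simp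
  show "c 7 1 6 = 0" by (rule A) simp
  show "c 7 1 7 = 0" by (rule A) simp
  show "c 7 2 1 = 0" by (rule A) simp
  show "c 7 2 2 = 0" by (rule A) simp
  show "c 7 2 3 = 0" by (rule A) simp
  show "c 7 2 4 = 0" by (rule A) simp
  show "c 7 2 5 = 0" by (rule A) simp
  show "c 7 2 6 = 0" by (rule A) simp
  show "c 7 2 7 = 0" by (rule A) simp
  show "c 7 3 1 = 0" by (rule A) simp
  show "c 7 3 2 = 0" by (rule A) simp
  show "c 7 3 3 = 0" by (rule A) simp
  show "c 7 3 4 = 0" by (rule A) simp
  show "c 7 3 5 = 0" by (rule A) simp
  show "c 7 3 6 = 0" by (rule A) simp
  show "c 7 3 7 = 0" by (rule A) simp
  show "c 7 4 1 = 0" by (rule A) simp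
  show "c 7 4 2 = 0" by (rule A) simp
  show "c 7 4 3 = 0" by (rule A) simp
  show "c 7 4 4 = 0" by (rule A) simp
  show "c 7 4 5 = 0" by (rule A) simp
  show "c 7 4 6 = 0" by (rule A) simp
  show "c 7 4 7 = 0" by (rule A) simp
  show "c 7 5 1 = 0" by (rule A) simp
  show "c 7 5 2 = 0" by (rule A) simp
  show "c 7 5 3 = 0" by (rule A) simp
  show "c 7 5 4 = 0" by (rule A) simp
  show "c 7 5 5 = 0" by (rule A) simp
  show "c 7 5 6 = 0" by (rule A) simp
  show "c 7 5 7 = 0" by (rule A) simp
  show "c 7 6 1 = 0" by (rule A) simp
  show "c 7 6 2 = 0" by (rule A) simp
  show "c 7 6 3 = 0" by (rule A) simp
  show "c 7 6 4 = 0" by (rule A) simp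
  show "c 7 6 5 = 0" by (rule A) simp
  show "c 7 6 6 = 0" by (rule A) simp
  show "c 7 6 7 = 0" by (rule A) simp
  show "c 7 7 1 = 0" by (rule I)
  show "c 7 7 2 = 0" by (rule I)
  show "c 7 7 3 = 0" by (rule I)
  show "c 7 7 4 = 0" by (rule I)
  show "c 7 7 5 = 0" by (rule I)
  show "c 7 7 6 = 0" by (rule I)
  show "c 7 7 7 = 0" by (rule I)
qed

lemma sum7: "(\<Sum>k=1..7. f k) = f 1 + f 2 + f 3 + f 4 + f 5 + f 6 + (f 7 :: complex)"
  for f :: "nat \<Rightarrow> complex"
  by (simp add: numeral_eq_Suc add.assoc)
lemma T7_nz: "T7hat c \<Longrightarrow> c 1 3 5 \<noteq> 0 \<and> c 4 6 7 \<noteq> 0"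
proof -
  assume "T7hat c"
  hence "c 1 3 5 * c 4 6 7 \<noteq> 0" unfolding T7hat_def by blast
  thus ?thesis by simp
qed
lemma key:
  fixes c d :: sconst
  assumes Tc: "T7hat c" and c1: "c 1 5 7 = 0" and c2: "c 2 5 7 = 0"
    and Td: "T7hat d" and d1: "d 1 5 7 = 0" and d2: "d 2 5 7 = 0" and d4: "d 4 6 7 = 1"
    and iso: "alg_iso c d"
  shows "\<exists>a. c 4 6 7 * a = 1 \<and> d 1 3 5 = c 1 3 5 \<and> d 1 3 7 = c 1 3 7 * a^3
     \<and> d 1 4 7 = c 1 4 7 * a^3 \<and> d 1 6 7 = c 1 6 7 * a \<and> d 2 4 7 = c 2 4 7 * a^4
     \<and> d 2 6 7 = c 2 6 7 * a^2 \<and> d 3 5 7 = c 3 5 7 * a^2 \<and> d 3 6 7 = c 3 6 7 * a"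
proof -
  note tc = tabT[OF Tc c1 c2] and td = tabT[OF Td d1 d2]
  have c135: "c 1 3 5 \<noteq> 0" using T7_nz[OF Tc] by simp
  have d135: "d 1 3 5 \<noteq> 0" using T7_nz[OF Td] by simp
  obtain P Q :: "nat \<Rightarrow> nat \<Rightarrow> complex" where
    I: "\<forall>i\<in>{1..7}. \<forall>j\<in>{1..7}.
           (\<Sum>k=1..7. P i k * Q k j) = (if i = j then 1 else 0) \<and>
           (\<Sum>k=1..7. Q i k * P k j) = (if i = j then 1 else 0)"
    and E: "\<forall>i\<in>{1..7}. \<forall>j\<in>{1..7}. \<forall>a\<in>{1..7}.
           (\<Sum>k=1..7. c i j k * P a k) =
           (\<Sum>b=1..7. \<Sum>e=1..7. P b i * P e j * d b e a)"
    using iso unfolding alg_iso_def by blast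
  note S = tc td
  note Z = c135 d135 d4
  have z13: "P 1 3 = 0" using E[rule_format, of 1 2 1, unfolded sum7] by (simp add: S Z del: One_nat_def)
  note Z = Z z13
  have z23: "P 2 3 = 0" using E[rule_format, of 1 2 2, unfolded sum7] by (simp add: S Z del: One_nat_def)
  note Z = Z z23
  have z14: "P 1 4 = 0" using E[rule_format, of 2 3 1, unfolded sum7] by (simp add: S Z del: One_nat_def)
  note Z = Z z14
  have z24: "P 2 4 = 0" using E[rule_format, of 2 3 2, unfolded sum7] by (simp add: S Z del: One_nat_def)
  note Z = Z z24
  have z34: "P 3 4 = 0" using E[rule_format, of 2 3 3, unfolded sum7] by (simp add: S Z del: One_nat_def)
  note Z = Z z34
  have z15: "P 1 5 = 0" using E[rule_format, of 3 4 1, unfolded sum7] by (simp add: S Z del: One_nat_def)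
  note Z = Z z15
  have z25: "P 2 5 = 0" using E[rule_format, of 3 4 2, unfolded sum7] by (simp add: S Z del: One_nat_def)
  note Z = Z z25
  have z35: "P 3 5 = 0" using E[rule_format, of 3 4 3, unfolded sum7] by (simp add: S Z del: One_nat_def)
  note Z = Z z35
  have z45: "P 4 5 = 0" using E[rule_format, of 3 4 4, unfolded sum7] by (simp add: S Z del: One_nat_def)
  note Z = Z z45
  have z16: "P 1 6 = 0" using E[rule_format, of 4 5 1, unfolded sum7] by (simp add: S Z del: One_nat_def)
  note Z = Z z16
  have z26: "P 2 6 = 0" using E[rule_format, of 4 5 2, unfolded sum7] by (simp add: S Z del: One_nat_def)
  note Z = Z z26
  have z36: "P 3 6 = 0" using E[rule_format, of 4 5 3, unfolded sum7] by (simp add: S Z del: One_nat_def)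
  note Z = Z z36
  have z46: "P 4 6 = 0" using E[rule_format, of 4 5 4, unfolded sum7] by (simp add: S Z del: One_nat_def)
  note Z = Z z46
  have z56: "P 5 6 = 0" using E[rule_format, of 4 5 5, unfolded sum7] by (simp add: S Z del: One_nat_def)
  note Z = Z z56
  have z17: "P 1 7 = 0" using E[rule_format, of 5 6 1, unfolded sum7] by (simp add: S Z del: One_nat_def)
  note Z = Z z17
  have z27: "P 2 7 = 0" using E[rule_format, of 5 6 2, unfolded sum7] by (simp add: S Z del: One_nat_def)
  note Z = Z z27
  have z37: "P 3 7 = 0" using E[rule_format, of 5 6 3, unfolded sum7] by (simp add: S Z del: One_nat_def)
  note Z = Z z37
  have z47: "P 4 7 = 0" using E[rule_format, of 5 6 4, unfolded sum7] by (simp add: S Z del: One_nat_def)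
  note Z = Z z47
  have z57: "P 5 7 = 0" using E[rule_format, of 5 6 5, unfolded sum7] by (simp add: S Z del: One_nat_def)
  note Z = Z z57
  have z67: "P 6 7 = 0" using E[rule_format, of 5 6 6, unfolded sum7] by (simp add: S Z del: One_nat_def)
  note Z = Z z67
  have qp: "Q 7 7 * P 7 7 = 1" using I[rule_format, of 7 7, unfolded sum7] by (simp add: Z del: One_nat_def)
  have n77: "P 7 7 \<noteq> 0" using qp by auto
  have e567: "P 7 7 = P 5 5 * P 6 6" using E[rule_format, of 5 6 7, unfolded sum7] by (simp add: S Z  del: One_nat_def)
  have e456: "P 6 6 = P 4 4 * P 5 5" using E[rule_format, of 4 5 6, unfolded sum7] by (simp add: S Z  del: One_nat_def)
  have e345: "P 5 5 = P 3 3 * P 4 4" using E[rule_format, of 3 4 5, unfolded sum7] by (simp add: S Z  del: One_nat_def)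
  have e234: "P 4 4 = P 2 2 * P 3 3" using E[rule_format, of 2 3 4, unfolded sum7] by (simp add: S Z  del: One_nat_def)
  have e123: "P 3 3 = P 1 1 * P 2 2 - P 1 2 * P 2 1" using E[rule_format, of 1 2 3, unfolded sum7] by (simp add: S Z  del: One_nat_def)
  have n55: "P 5 5 \<noteq> 0" using n77 e567 by auto
  have n66: "P 6 6 \<noteq> 0" using n77 e567 by auto
  have n44: "P 4 4 \<noteq> 0" using n55 e345 by auto
  have n33: "P 3 3 \<noteq> 0" using n55 e345 by auto
  have n22: "P 2 2 \<noteq> 0" using n44 e234 by auto
  note Z = Z n77 n55 n66 n44 n33 n22
  have z21: "P 2 1 = 0" using E[rule_format, of 1 3 4, unfolded sum7] by (simp add: S Z  del: One_nat_def)
  note Z = Z z21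
  have z31: "P 3 1 = 0" using E[rule_format, of 1 4 5, unfolded sum7] by (simp add: S Z  del: One_nat_def)
  note Z = Z z31
  have z32: "P 3 2 = 0" using E[rule_format, of 2 4 5, unfolded sum7] by (simp add: S Z  del: One_nat_def)
  note Z = Z z32
  have z41: "P 4 1 = 0" using E[rule_format, of 1 5 6, unfolded sum7] by (simp add: S Z  del: One_nat_def)
  note Z = Z z41
  have z42: "P 4 2 = 0" using E[rule_format, of 2 5 6, unfolded sum7] by (simp add: S Z  del: One_nat_def)
  note Z = Z z42
  have z43: "P 4 3 = 0" using E[rule_format, of 1 2 4, unfolded sum7] by (simp add: S Z  del: One_nat_def)
  note Z = Z z43
  have e356: "P 6 6 = P 3 3 * P 5 5" using E[rule_format, of 3 5 6, unfolded sum7] by (simp add: S Z  del: One_nat_def)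
  have p44: "P 4 4 = P 3 3" using e356 e456 n55 by auto
  have p22: "P 2 2 = 1" using p44 e234 n33 by auto
  have p33: "P 3 3 = P 1 1" using e123 p22 z21 by simp
  have p44b: "P 4 4 = P 1 1" using p44 p33 by simp
  have p55: "P 5 5 = P 1 1 ^ 2" using e345 p33 p44b by (simp add: power2_eq_square)
  have p66: "P 6 6 = P 1 1 ^ 3" using e456 p44b p55 by (simp add: power3_eq_cube power2_eq_square)
  have p77: "P 7 7 = P 1 1 ^ 5" using e567 p55 p66 by (simp add: power_add[symmetric])
  have z51: "P 5 1 = 0" using E[rule_format, of 1 4 6, unfolded sum7] by (simp add: S Z  del: One_nat_def)
  note Z = Z z51
  have z52: "P 5 2 = 0" using E[rule_format, of 2 4 6, unfolded sum7] by (simp add: S Z  del: One_nat_def)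
  note Z = Z z52
  have z53: "P 5 3 = 0" using E[rule_format, of 1 2 5, unfolded sum7] by (simp add: S Z  del: One_nat_def)
  note Z = Z z53
  have z63: "P 6 3 = 0" using E[rule_format, of 1 2 6, unfolded sum7] by (simp add: S Z  del: One_nat_def)
  note Z = Z z63
  have z65: "P 6 5 = 0" using E[rule_format, of 1 3 6, unfolded sum7] by (simp add: S Z  del: One_nat_def)
  note Z = Z z65
  have z54: "P 5 4 = 0" using E[rule_format, of 3 4 6, unfolded sum7] by (simp add: S Z  del: One_nat_def)
  note Z = Z z54
  have z12: "P 1 2 = 0" using E[rule_format, of 2 3 5, unfolded sum7] by (simp add: S Z  del: One_nat_def)
  note Z = Z z12
  have z61: "P 6 1 = 0" using E[rule_format, of 1 5 7, unfolded sum7] by (simp add: S Z  del: One_nat_def)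
  note Z = Z z61
  have z62: "P 6 2 = 0" using E[rule_format, of 2 5 7, unfolded sum7] by (simp add: S Z  del: One_nat_def)
  note Z = Z z62
  have z64: "P 6 4 = 0" using E[rule_format, of 2 3 6, unfolded sum7] by (simp add: S Z  del: One_nat_def)
  note Z = Z z64
  have z76: "P 7 6 = 0" using E[rule_format, of 4 5 7, unfolded sum7] by (simp add: S Z  del: One_nat_def)
  note Z = Z z76
  have z75: "P 7 5 = 0" using E[rule_format, of 3 4 7, unfolded sum7] by (simp add: S Z  del: One_nat_def)
  note Z = Z z75
  note Z = Z p22
  have r135: "c 1 3 5 * P 5 5 = d 1 3 5 * P 1 1 * P 3 3" using E[rule_format, of 1 3 5, unfolded sum7] by (simp add: S Z  del: One_nat_def)
  have r467: "c 4 6 7 * P 7 7 = P 4 4 * P 6 6" using E[rule_format, of 4 6 7, unfolded sum7] by (simp add: S Z  del: One_nat_def)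
  have r167: "c 1 6 7 * P 7 7 = d 1 6 7 * P 1 1 * P 6 6" using E[rule_format, of 1 6 7, unfolded sum7] by (simp add: S Z  del: One_nat_def)
  have r267: "c 2 6 7 * P 7 7 = d 2 6 7 * P 6 6" using E[rule_format, of 2 6 7, unfolded sum7] by (simp add: S Z  del: One_nat_def)
  have r367: "c 3 6 7 * P 7 7 = d 3 6 7 * P 3 3 * P 6 6" using E[rule_format, of 3 6 7, unfolded sum7] by (simp add: S Z  del: One_nat_def)
  have r357: "c 3 5 7 * P 7 7 = d 3 5 7 * P 3 3 * P 5 5" using E[rule_format, of 3 5 7, unfolded sum7] by (simp add: S Z  del: One_nat_def)
  have r247: "c 2 4 7 * P 7 7 = d 2 4 7 * P 4 4" using E[rule_format, of 2 4 7, unfolded sum7] by (simp add: S Z  del: One_nat_def)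
  have r147: "c 1 4 7 * P 7 7 = d 1 4 7 * P 1 1 * P 4 4" using E[rule_format, of 1 4 7, unfolded sum7] by (simp add: S Z  del: One_nat_def)
  have r137: "c 1 3 7 * P 7 7 = d 1 3 7 * P 1 1 * P 3 3" using E[rule_format, of 1 3 7, unfolded sum7] by (simp add: S Z  del: One_nat_def)
  have n11: "P 1 1 \<noteq> 0" using n33 p33 by simp
  have a0: "P 1 1 ^ 2 * ((d 1 3 5) - (c 1 3 5)) = 0" using r135 p55 p33 by algebra
  have b0: "d 1 3 5 = c 1 3 5" using a0 n11 by simp
  have a1: "P 1 1 ^ 2 * ((d 1 3 7) - (c 1 3 7 * P 1 1 ^ 3)) = 0" using r137 p77 p33 by algebra
  have b1: "d 1 3 7 = c 1 3 7 * P 1 1 ^ 3" using a1 n11 by simp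
  have a2: "P 1 1 ^ 2 * ((d 1 4 7) - (c 1 4 7 * P 1 1 ^ 3)) = 0" using r147 p77 p44b by algebra
  have b2: "d 1 4 7 = c 1 4 7 * P 1 1 ^ 3" using a2 n11 by simp
  have a3: "P 1 1 ^ 4 * ((d 1 6 7) - (c 1 6 7 * P 1 1)) = 0" using r167 p77 p66 by algebra
  have b3: "d 1 6 7 = c 1 6 7 * P 1 1" using a3 n11 by simp
  have a4: "P 1 1 ^ 1 * ((d 2 4 7) - (c 2 4 7 * P 1 1 ^ 4)) = 0" using r247 p77 p44b by algebra
  have b4: "d 2 4 7 = c 2 4 7 * P 1 1 ^ 4" using a4 n11 by simp
  have a5: "P 1 1 ^ 3 * ((d 2 6 7) - (c 2 6 7 * P 1 1 ^ 2)) = 0" using r267 p77 p66 by algebra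
  have b5: "d 2 6 7 = c 2 6 7 * P 1 1 ^ 2" using a5 n11 by simp
  have a6: "P 1 1 ^ 3 * ((d 3 5 7) - (c 3 5 7 * P 1 1 ^ 2)) = 0" using r357 p77 p33 p55 by algebra
  have b6: "d 3 5 7 = c 3 5 7 * P 1 1 ^ 2" using a6 n11 by simp
  have a7: "P 1 1 ^ 4 * ((d 3 6 7) - (c 3 6 7 * P 1 1)) = 0" using r367 p77 p33 p66 by algebra
  have b7: "d 3 6 7 = c 3 6 7 * P 1 1" using a7 n11 by simp
  have a8: "P 1 1 ^ 4 * ((c 4 6 7 * P 1 1) - (1)) = 0" using r467 p77 p44b p66 by algebra
  have b8: "c 4 6 7 * P 1 1 = 1" using a8 n11 by simp
  show ?thesis using b0 b1 b2 b3 b4 b5 b6 b7 b8 by blast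
qed

lemma fam_eq:
  fixes x y :: sconst
  assumes Tx: "T7hat x" and x1: "x 1 5 7 = 0" and x2: "x 2 5 7 = 0"
    and Ty: "T7hat y" and y1: "y 1 5 7 = 0" and y2: "y 2 5 7 = 0"
    and f: "x 1 3 5 = y 1 3 5" "x 1 3 7 = y 1 3 7" "x 1 4 7 = y 1 4 7" "x 1 6 7 = y 1 6 7"
      "x 2 4 7 = y 2 4 7" "x 2 6 7 = y 2 6 7" "x 3 5 7 = y 3 5 7" "x 3 6 7 = y 3 6 7" "x 4 6 7 = y 4 6 7"
  shows "x = y"
proof (intro ext)
  fix i j k :: nat
  have sx: "x i j k \<noteq> 0 \<longrightarrow> i \<in> {1..7} \<and> j \<in> {1..7} \<and> k \<in> {1..7}"
    using Tx unfolding T7hat_def by blast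
  have sy: "y i j k \<noteq> 0 \<longrightarrow> i \<in> {1..7} \<and> j \<in> {1..7} \<and> k \<in> {1..7}"
    using Ty unfolding T7hat_def by blast
  show "x i j k = y i j k"
  proof (cases "i \<in> {1..7} \<and> j \<in> {1..7} \<and> k \<in> {1..7}")
    case False
    then show ?thesis using sx sy by auto
  next
    case True
    have i7: "i = 1 \<or> i = 2 \<or> i = 3 \<or> i = 4 \<or> i = 5 \<or> i = 6 \<or> i = 7"
      and j7: "j = 1 \<or> j = 2 \<or> j = 3 \<or> j = 4 \<or> j = 5 \<or> j = 6 \<or> j = 7"
      and k7: "k = 1 \<or> k = 2 \<or> k = 3 \<or> k = 4 \<or> k = 5 \<or> k = 6 \<or> k = 7"
      using True by auto
    show ?thesis
      apply (insert i7 j7 k7)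
      apply (elim disjE)
      apply (simp_all only: tabT[OF Tx x1 x2] tabT[OF Ty y1 y2] f)
      done
  qed
qed
definition mu :: "complex \<Rightarrow> nat \<Rightarrow> complex" where
  "mu a k = (if k = 1 then a else if k = 2 then 1 else if k = 3 then a else if k = 4 then a
     else if k = 5 then a^2 else if k = 6 then a^3 else if k = 7 then a^5 else 1)"

definition DD :: "complex \<Rightarrow> sconst \<Rightarrow> sconst" where
  "DD a c i j k = c i j k * mu a k / (mu a i * mu a j)"

lemma mu_nz: "a \<noteq> 0 \<Longrightarrow> mu a k \<noteq> 0"
  unfolding mu_def by auto

lemma DD_T7:
  fixes c :: sconst
  assumes T: "T7hat c" and a: "c 4 6 7 * a = 1"
  shows "T7hat (DD a c)"
proof -
  have a0: "a \<noteq> 0" using a by auto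
  have S: "\<forall>i j k. c i j k \<noteq> 0 \<longrightarrow> i \<in> {1..7} \<and> j \<in> {1..7} \<and> k \<in> {1..7}"
    and A: "\<forall>i j k. c i i k = 0 \<and> c j i k = - c i j k"
    and M: "\<forall>i j k. k \<le> max i j \<longrightarrow> c i j k = 0"
    and C: "\<forall>i\<in>{1..5}. \<forall>k. c i (i+1) k = (if k = i + 2 then 1 else 0)"
    and F: "c 1 3 4 = 0" "c 1 4 5 = 0" "c 1 5 6 = 0" "c 2 4 5 = 0"
     "c 2 5 6 = 0" "c 1 4 6 = 0" "c 2 4 6 = 0" "c 1 3 6 = 0"
     "c 3 5 6 = 1" "c 1 3 5 * c 4 6 7 \<noteq> 0"
    using T unfolding T7hat_def by blast+
  have C': "DD a c i (i+1) k = (if k = i + 2 then 1 else 0)" if "i \<in> {1..5}" for i k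
  proof -
    have ci: "c i (i+1) k = (if k = i + 2 then 1 else 0)" using C that by blast
    have "i = 1 \<or> i = 2 \<or> i = 3 \<or> i = 4 \<or> i = 5" using that by auto
    then have m: "mu a (i+2) = mu a i * mu a (i+1)"
      by (elim disjE) (simp_all add: mu_def power2_eq_square power3_eq_cube numeral_eq_Suc)
    have "DD a c i (i+1) k = (if k = i + 2 then mu a (i+2) / (mu a i * mu a (i+1)) else 0)"
      unfolding DD_def ci by simp
    then show ?thesis using m mu_nz[OF a0] by simp
  qed
  have h1: "\<forall>i j k. DD a c i j k \<noteq> 0 \<longrightarrow> i \<in> {1..7} \<and> j \<in> {1..7} \<and> k \<in> {1..7}"
    using S unfolding DD_def by auto
  have h2: "\<forall>i j k. DD a c i i k = 0 \<and> DD a c j i k = - DD a c i j k"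
  proof (intro allI)
    fix i j k
    have e1: "c i i k = 0" and e2: "c j i k = - c i j k" using A by blast+
    show "DD a c i i k = 0 \<and> DD a c j i k = - DD a c i j k"
      unfolding DD_def e1 e2 by (simp add: mult.commute)
  qed
  have h3: "\<forall>i j k. k \<le> max i j \<longrightarrow> DD a c i j k = 0" using M unfolding DD_def by simp
  have h4: "\<forall>i\<in>{1..5}. \<forall>k. DD a c i (i+1) k = (if k = i + 2 then 1 else 0)" using C' by blast
  have h5: "DD a c 1 3 4 = 0" "DD a c 1 4 5 = 0" "DD a c 1 5 6 = 0" "DD a c 2 4 5 = 0"
     "DD a c 2 5 6 = 0" "DD a c 1 4 6 = 0" "DD a c 2 4 6 = 0" "DD a c 1 3 6 = 0"
    using F by (simp_all add: DD_def)
  have h6: "DD a c 3 5 6 = 1" using F a0 by (simp add: DD_def mu_def power2_eq_square power3_eq_cube)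
  have "DD a c 4 6 7 = c 4 6 7 * a" using a0 by (simp add: DD_def mu_def power2_eq_square power3_eq_cube eval_nat_numeral)
  moreover have "DD a c 1 3 5 = c 1 3 5" using a0 by (simp add: DD_def mu_def power2_eq_square)
  ultimately have h7: "DD a c 1 3 5 * DD a c 4 6 7 \<noteq> 0" using F a by simp
  show ?thesis unfolding T7hat_def by (intro conjI h1 h2 h3 h4 h5 h6 h7)
qed

lemma ifm1: "(if p then x else 0) * (y::complex) = (if p then x * y else 0)" by simp
lemma ifm2: "(y::complex) * (if p then x else 0) = (if p then y * x else 0)" by simp
lemma ifd: "(if p then x else 0) / (y::complex) = (if p then x / y else 0)" by simp
lemma sum_if_out: "(\<Sum>k\<in>S. if p then f k else (0::complex)) = (if p then (\<Sum>k\<in>S. f k) else 0)" by simp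

lemma DD_iso:
  fixes c :: sconst
  assumes a0: "a \<noteq> 0"
  shows "alg_iso c (DD a c)"
  unfolding alg_iso_def
proof (intro exI conjI ballI)
  let ?P = "\<lambda>x y. if x = y then mu a y else 0"
  let ?Q = "\<lambda>x y. if x = y then inverse (mu a y) else 0"
  fix i j assume i: "i \<in> {1..7::nat}" and j: "j \<in> {1..7::nat}"
  show "(\<Sum>k=1..7. ?P i k * ?Q k j) = (if i = j then 1 else 0)"
    using i mu_nz[OF a0, of i] mu_nz[OF a0, of j] by (simp add: ifm1 ifm2 sum.delta sum.delta' cong: if_cong)
  show "(\<Sum>k=1..7. ?Q i k * ?P k j) = (if i = j then 1 else 0)"
    using i mu_nz[OF a0, of i] mu_nz[OF a0, of j] by (simp add: ifm1 ifm2 sum.delta sum.delta' cong: if_cong)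
  fix x assume x: "x \<in> {1..7::nat}"
  show "(\<Sum>k=1..7. c i j k * ?P x k) = (\<Sum>b=1..7. \<Sum>e=1..7. ?P b i * ?P e j * DD a c b e x)"
    using i j x mu_nz[OF a0, of i] mu_nz[OF a0, of j]
    by (simp add: ifm1 ifm2 sum.delta sum.delta' sum_if_out ifd DD_def cong: if_cong)
qed

lemma DD_vals:
  fixes c :: sconst
  assumes a0: "a \<noteq> 0"
  shows "DD a c 1 3 5 = c 1 3 5" "DD a c 1 3 7 = c 1 3 7 * a^3" "DD a c 1 4 7 = c 1 4 7 * a^3"
    "DD a c 1 6 7 = c 1 6 7 * a" "DD a c 2 4 7 = c 2 4 7 * a^4" "DD a c 2 6 7 = c 2 6 7 * a^2"
    "DD a c 3 5 7 = c 3 5 7 * a^2" "DD a c 3 6 7 = c 3 6 7 * a" "DD a c 4 6 7 = c 4 6 7 * a"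
    "DD a c 1 5 7 = c 1 5 7 * a^2" "DD a c 2 5 7 = c 2 5 7 * a^3"
  using a0 by (simp_all add: DD_def mu_def field_simps eval_nat_numeral)

theorem mainTheorem19:
  fixes c :: sconst
  assumes "T7hat c" and "c 1 5 7 = 0" and "c 2 5 7 = 0"
  shows "\<exists>!d. T7hat d \<and> d 1 5 7 = 0 \<and> d 2 5 7 = 0 \<and> d 4 6 7 = 1 \<and> alg_iso c d"
proof -
  note T = assms(1) and c1 = assms(2) and c2 = assms(3)
  define a where "a = inverse (c 4 6 7)"
  have c0: "c 4 6 7 \<noteq> 0" using T7_nz[OF T] by simp
  have ca: "c 4 6 7 * a = 1" unfolding a_def using c0 by simp
  have a0: "a \<noteq> 0" using ca by auto
  note V = DD_vals[OF a0, of c]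
  have ex: "T7hat (DD a c) \<and> DD a c 1 5 7 = 0 \<and> DD a c 2 5 7 = 0 \<and> DD a c 4 6 7 = 1 \<and> alg_iso c (DD a c)"
    using DD_T7[OF T ca] DD_iso[OF a0, of c] V c1 c2 ca by simp
  show ?thesis
  proof (rule ex1I[of _ "DD a c"])
    show "T7hat (DD a c) \<and> DD a c 1 5 7 = 0 \<and> DD a c 2 5 7 = 0 \<and> DD a c 4 6 7 = 1 \<and> alg_iso c (DD a c)"
      by (rule ex)
  next
    fix y assume y: "T7hat y \<and> y 1 5 7 = 0 \<and> y 2 5 7 = 0 \<and> y 4 6 7 = 1 \<and> alg_iso c y"
    then obtain b where b: "c 4 6 7 * b = 1" and
      yv: "y 1 3 5 = c 1 3 5" "y 1 3 7 = c 1 3 7 * b^3"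
     "y 1 4 7 = c 1 4 7 * b^3" "y 1 6 7 = c 1 6 7 * b" "y 2 4 7 = c 2 4 7 * b^4"
     "y 2 6 7 = c 2 6 7 * b^2" "y 3 5 7 = c 3 5 7 * b^2" "y 3 6 7 = c 3 6 7 * b"
      using key[OF T c1 c2, of y] by blast
    have ab: "b = a" unfolding a_def using b c0 by (simp add: field_simps)
    show "y = DD a c"
    proof (rule sym, rule fam_eq)
      show "T7hat (DD a c)" "DD a c 1 5 7 = 0" "DD a c 2 5 7 = 0" using ex by auto
      show "T7hat y" "y 1 5 7 = 0" "y 2 5 7 = 0" using y by auto
    qed (use V yv ab y ca in simp_all)
  qed
qed

end
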